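(* Let $A$ be a $\boldsymbol{\mathit{ba}\ell}$-algebra, $X={\sf Arch}(A)\setminus\{A\}$, $0\le a\in A$, $I\in X$, and $\alpha:A\to D(\mathbb R[B])$ as in the context. (1) If $s_I=\sup\{r\in\mathbb R\mid (a-r)^-\in I\}$, then $(a-s_I)^-\in I$. (2) For $r\in\mathbb R$: $rx_{\lnot I}\le\alpha(a)$ if and only if $(a-r)^-\in I$. (3) $s_I=\sup\{r\in\mathbb R\mid rx_{\lnot I}\le\alpha(a)\}$, and $I\vee[\![(a-s_I)^+]\!]\ne A$.
   Context: A $\boldsymbol{\mathit{ba}\ell}$-algebra is a commutative unital lattice-ordered algebra $A$ over $\mathbb R$ that is bounded (for every $a\in A$ there is an integer $n\ge1$ with $a\le n\cdot1$) and archimedean (if $na\le b$ for all $n\ge1$ then $a\le0$); reals $r$ are identified with $r\cdot1$. $a^+=a\vee0$, $a^-=(-a)\vee0$. An $\ell$-ideal is a ring ideal $I$ with $|a|\le|b|$, $b\in I\Rightarrow a\in I$; it is archimedean if $A/I$ is archimedean. ${\sf Arch}(A)$ is the set of archimedean $\ell$-ideals ordered by inclusion, a frame with meet $\cap$ and join $I\vee J$ the least archimedean $\ell$-ideal containing $I\cup J$; $[\![S]\!]$ is the intersection of all archimedean $\ell$-ideals containing $S\subseteq A$. $B$ is the free boolean extension of the bounded distributive lattice ${\sf Arch}(A)$; ${\sf Arch}(A)\subseteq B$ and $\lnot$ is complement in $B$. $\mathbb R[B]$ is the quotient of $\mathbb R[x_e\mid e\in B]$ by the ideal generated by $x_{e\wedge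 f}-x_ex_f$, $x_{e\vee f}-(x_e+x_f-x_ex_f)$, $x_{\lnot e}-(1-x_e)$, $x_0$; $D(\mathbb R[B])$ is its Dedekind completion (Dedekind complete $\boldsymbol{\mathit{ba}\ell}$-algebra containing $\mathbb R[B]$, every element a join of elements of $\mathbb R[B]$). $\alpha(a)=-s+\bigvee\{rx_{\lnot I}\mid r\in\mathbb R,\ I\in{\sf Arch}(A),\ (a+s-r)^-\in I\}$ for any $s\in\mathbb R$ with $a+s\ge0$ (well defined, independent of $s$). *)

theory Defs
  imports Complex_Main "HOL-Library.Poly_Mapping"
begin

text \<open>A bounded archimedean lattice-ordered commutative unital real algebra.
  The real scalar multiplication is scaleR; reals r are identified with of_real r = r *R 1.\<close>

class bal_algebra = comm_ring_1 + real_algebra_1 + lattice +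
  assumes bal_add_mono: "a \<le> b \<Longrightarrow> a + c \<le> b + c"
    and bal_mult_nonneg: "0 \<le> a \<Longrightarrow> 0 \<le> b \<Longrightarrow> 0 \<le> a * b"
    and bal_scale_nonneg: "0 \<le> a \<Longrightarrow> 0 \<le> r \<Longrightarrow> 0 \<le> r *\<^sub>R a"
    and bal_bounded: "\<exists>n::nat. n \<ge> 1 \<and> a \<le> of_nat n"
    and bal_archimedean: "(\<And>n::nat. n \<ge> 1 \<Longrightarrow> of_nat n * a \<le> b) \<Longrightarrow> a \<le> 0"

definition pos :: "'a::{lattice, ab_group_add} \<Rightarrow> 'a" where
  "pos a = sup a 0"

definition neg :: "'a::{lattice, ab_group_add} \<Rightarrow> 'a" where
  "neg a = sup (- a) 0"

definition labs :: "'a::{lattice, ab_group_add} \<Rightarrow> 'a" where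
  "labs a = sup a (- a)"

definition ring_ideal :: "'a::comm_ring_1 set \<Rightarrow> bool" where
  "ring_ideal I \<longleftrightarrow> 0 \<in> I \<and> (\<forall>a\<in>I. \<forall>b\<in>I. a - b \<in> I) \<and> (\<forall>a\<in>I. \<forall>c. c * a \<in> I)"

definition l_ideal :: "'a::bal_algebra set \<Rightarrow> bool" where
  "l_ideal I \<longleftrightarrow> ring_ideal I \<and> (\<forall>a b. labs a \<le> labs b \<and> b \<in> I \<longrightarrow> a \<in> I)"

text \<open>Order of the quotient A/I: [x] <= [y] iff x' <= y' for some representatives,
  i.e. x <= y + c for some c in I.\<close>
definition quot_le :: "'a::bal_algebra set \<Rightarrow> 'a \<Rightarrow> 'a \<Rightarrow> bool" where
  "quot_le I x y \<longleftrightarrow> (\<exists>c\<in>I. x \<le> y + c)"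

text \<open>Archimedean ell-ideal: A/I is archimedean.\<close>
definition arch_ideal :: "'a::bal_algebra set \<Rightarrow> bool" where
  "arch_ideal I \<longleftrightarrow> l_ideal I \<and>
     (\<forall>x y. (\<forall>n::nat. n \<ge> 1 \<longrightarrow> quot_le I (of_nat n * x) y) \<longrightarrow> quot_le I x 0)"

definition Arch :: "'a::bal_algebra set set" where
  "Arch = {I. arch_ideal I}"

definition arch_gen :: "'a::bal_algebra set \<Rightarrow> 'a set" where
  "arch_gen S = \<Inter> {I. arch_ideal I \<and> S \<subseteq> I}"

definition arch_join :: "'a::bal_algebra set \<Rightarrow> 'a set \<Rightarrow> 'a set" where
  "arch_join I J = arch_gen (I \<union> J)"

text \<open>e embeds the bounded distributive lattice Arch(A) (bottom arch_gen {}, top UNIV,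
  meet intersection, join arch_join) into the boolean algebra 'b, and its image generates 'b
  as a boolean algebra.\<close>
definition free_bool_ext :: "('a::bal_algebra set \<Rightarrow> 'b::boolean_algebra) \<Rightarrow> bool" where
  "free_bool_ext e \<longleftrightarrow>
     inj_on e Arch \<and> e (arch_gen {}) = bot \<and> e UNIV = top \<and>
     (\<forall>I\<in>Arch. \<forall>J\<in>Arch. e (I \<inter> J) = inf (e I) (e J) \<and> e (arch_join I J) = sup (e I) (e J)) \<and>
     (\<forall>S. e ` Arch \<subseteq> S \<and> (\<forall>u\<in>S. \<forall>v\<in>S. inf u v \<in> S \<and> sup u v \<in> S) \<and> (\<forall>u\<in>S. - u \<in> S)
          \<longrightarrow> S = UNIV)"

type_synonym 'b rpoly = "('b \<Rightarrow>\<^sub>0 nat) \<Rightarrow>\<^sub>0 real"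

text \<open>The polynomial variable x_e of R[x_e | e in B].\<close>
definition pvar :: "'b \<Rightarrow> 'b rpoly" where
  "pvar e = Poly_Mapping.single (Poly_Mapping.single e 1) 1"

definition ideal_gen :: "'a::comm_ring_1 set \<Rightarrow> 'a set" where
  "ideal_gen G = \<Inter> {J. ring_ideal J \<and> G \<subseteq> J}"

definition rel_ideal :: "('b::boolean_algebra) rpoly set" where
  "rel_ideal = ideal_gen
     ({pvar (inf e f) - pvar e * pvar f | e f. True} \<union>
      {pvar (sup e f) - (pvar e + pvar f - pvar e * pvar f) | e f. True} \<union>
      {pvar (- e) - (1 - pvar e) | e. True} \<union>
      {pvar bot})"

definition peval :: "('b \<Rightarrow> 'd::bal_algebra) \<Rightarrow> 'b rpoly \<Rightarrow> 'd" where
  "peval x p = (\<Sum>m\<in>Poly_Mapping.keys p.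
       Poly_Mapping.lookup p m *\<^sub>R (\<Prod>e\<in>Poly_Mapping.keys m. x e ^ Poly_Mapping.lookup m e))"

definition is_lub :: "'d::order \<Rightarrow> 'd set \<Rightarrow> bool" where
  "is_lub l S \<longleftrightarrow> (\<forall>y\<in>S. y \<le> l) \<and> (\<forall>u. (\<forall>y\<in>S. y \<le> u) \<longrightarrow> l \<le> u)"

definition lub :: "'d::order set \<Rightarrow> 'd" where
  "lub S = (THE l. is_lub l S)"

definition dedekind_complete :: "'d::order itself \<Rightarrow> bool" where
  "dedekind_complete _ \<longleftrightarrow>
     (\<forall>S::'d set. S \<noteq> {} \<and> (\<exists>u. \<forall>y\<in>S. y \<le> u) \<longrightarrow> (\<exists>l. is_lub l S))"

text \<open>The bal-algebra 'd, with x e the image of x_e, is a Dedekind completion D(R[B]):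
  'd is Dedekind complete, the evaluation map R[x_e] -> 'd has kernel exactly the ideal
  of relations (so it induces an embedding of R[B] = R[x_e]/rel_ideal into 'd), and every
  element of 'd is a join of elements of (the image of) R[B].\<close>
definition RB_completion :: "('b::boolean_algebra \<Rightarrow> 'd::bal_algebra) \<Rightarrow> bool" where
  "RB_completion x \<longleftrightarrow>
     dedekind_complete TYPE('d) \<and>
     (\<forall>p. peval x p = 0 \<longleftrightarrow> p \<in> rel_ideal) \<and>
     (\<forall>d. \<exists>S \<subseteq> range (peval x). is_lub d S)"

definition alpha :: "('a::bal_algebra set \<Rightarrow> 'b::boolean_algebra) \<Rightarrow> ('b \<Rightarrow> 'd::bal_algebra)
    \<Rightarrow> 'a \<Rightarrow> 'd" where
  "alpha e x a = (let s = (SOME s::real. 0 \<le> a + of_real s) in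
     of_real (- s) + lub {r *\<^sub>R x (- e I) | r I. I \<in> Arch \<and> neg (a + of_real s - of_real r) \<in> I})"

end

theory Submission
  imports Defs "HOL-Library.Lattice_Algebras"
begin


context bal_algebra begin
subclass ordered_comm_ring
proof
  fix a b c :: 'a
  show "a \<le> b \<Longrightarrow> c + a \<le> c + b" using bal_add_mono[of a b c] by (simp add: add.commute)
  show "a \<le> b \<Longrightarrow> 0 \<le> c \<Longrightarrow> c * a \<le> c * b"
  proof -
    assume "a \<le> b" "0 \<le> c"
    have "0 \<le> b - a" using bal_add_mono[of a b "-a"] \<open>a \<le> b\<close> by simp
    hence "0 \<le> c * (b - a)" using bal_mult_nonneg \<open>0 \<le> c\<close> by blast
    hence "0 + c*a \<le> c * (b - a) + c*a" using bal_add_mono by blast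
    thus ?thesis by (simp add: algebra_simps)
  qed
qed
subclass lattice_ab_group_add ..
end

lemma scaleR_mono_bal: "x \<le> y \<Longrightarrow> 0 \<le> a \<Longrightarrow> a *\<^sub>R x \<le> a *\<^sub>R (y::'a::bal_algebra)"
proof -
  assume "x \<le> y" "0 \<le> a"
  have "0 \<le> y - x" using \<open>x \<le> y\<close> by simp
  hence "0 \<le> a *\<^sub>R (y - x)" using bal_scale_nonneg \<open>0 \<le> a\<close> by blast
  thus ?thesis by (simp add: scaleR_diff_right)
qed

lemma scaleR_mono_bal2: "a \<le> b \<Longrightarrow> 0 \<le> x \<Longrightarrow> a *\<^sub>R x \<le> b *\<^sub>R (x::'a::bal_algebra)"
proof -
  assume "a \<le> b" "0 \<le> x"
  have "0 \<le> (b - a) *\<^sub>R x" using bal_scale_nonneg[of x "b-a"] \<open>0 \<le> x\<close> \<open>a \<le> b\<close> by simp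
  thus ?thesis by (simp add: scaleR_diff_left)
qed


lemma of_real_eq_scaleR_one: "(of_real r :: 'a::real_algebra_1) = r *\<^sub>R 1"
  by (simp add: of_real_def)

lemma one_nonneg_bal: "0 \<le> (1::'a::bal_algebra)"
proof -
  obtain n::nat where n: "n \<ge> 1" "- 1 \<le> (of_nat n :: 'a)" using bal_bounded[of "-1::'a"] by blast
  have "0 \<le> (of_nat n + 1 :: 'a)" using add_right_mono[OF n(2), of 1] by simp
  also have "(of_nat n + 1 :: 'a) = real (n+1) *\<^sub>R 1" by (simp add: scaleR_conv_of_real)
  finally have h: "0 \<le> real (n+1) *\<^sub>R (1::'a)" .
  have "0 \<le> (1 / real (n+1)) *\<^sub>R (real (n+1) *\<^sub>R (1::'a))"
    by (rule bal_scale_nonneg[OF h]) simp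
  moreover have "(1 / real (n+1)) *\<^sub>R (real (n+1) *\<^sub>R (1::'a)) = 1" by simp
  ultimately show ?thesis by simp
qed

lemma of_real_nonneg_bal: "0 \<le> r \<Longrightarrow> 0 \<le> (of_real r :: 'a::bal_algebra)"
  using bal_scale_nonneg[OF one_nonneg_bal] by (simp add: of_real_eq_scaleR_one)

lemma of_real_mono_bal: "r \<le> s \<Longrightarrow> (of_real r :: 'a::bal_algebra) \<le> of_real s"
  using of_real_nonneg_bal[of "s - r", where 'a='a] by (simp add: of_real_diff)

lemma of_nat_nonneg_bal: "0 \<le> (of_nat n :: 'a::bal_algebra)"
  using of_real_nonneg_bal[of "real n", where 'a='a] by simp

lemma of_real_strict_mono_bal: "r < s \<Longrightarrow> (of_real r :: 'a::bal_algebra) < of_real s"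
  using of_real_mono_bal[of r s, where 'a='a] by (metis less_le of_real_eq_iff)

lemma scaleR_as_mult: "r *\<^sub>R (y::'a::real_algebra_1) = of_real r * y"
  by (simp add: scaleR_conv_of_real)

lemma pos_ge0: "0 \<le> pos (y::'a::bal_algebra)" by (simp add: pos_def)
lemma pos_ge: "y \<le> pos (y::'a::bal_algebra)" by (simp add: pos_def)
lemma neg_ge0: "0 \<le> neg (y::'a::bal_algebra)" by (simp add: neg_def)
lemma neg_ge: "- y \<le> neg (y::'a::bal_algebra)" by (simp add: neg_def)
lemma neg_zero_if: "0 \<le> y \<Longrightarrow> neg (y::'a::bal_algebra) = 0"
  by (simp add: neg_def sup_absorb2)
lemma neg_antimono: "y1 \<le> y2 \<Longrightarrow> neg y2 \<le> neg (y1::'a::bal_algebra)"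
  unfolding neg_def by (rule sup_mono) simp_all
lemma neg_diff_le: "0 \<le> c \<Longrightarrow> neg (y - c) \<le> neg y + (c::'a::bal_algebra)"
  unfolding neg_def
  by (rule sup_least) (simp_all add: add_increasing add_mono)
lemma add_neg_eq_pos: "y + neg y = pos (y::'a::bal_algebra)"
  unfolding neg_def pos_def by (simp add: add_sup_distrib_left sup_commute)
lemma pos_minus_neg: "pos y - neg y = (y::'a::bal_algebra)"
  using add_neg_eq_pos[of y] by (simp add: algebra_simps)
lemma pos_inf_neg: "inf (pos y) (neg y) = (0::'a::bal_algebra)"
proof -
  have "inf (pos y) (neg y) = inf (neg y + y) (neg y + 0)"
    using add_neg_eq_pos[of y] by (simp add: add.commute)
  also have "\<dots> = neg y + inf y 0" by (simp add: add_inf_distrib_left)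
  also have "inf y 0 = - neg y" unfolding neg_def by (simp add: neg_sup_eq_inf)
  finally show ?thesis by simp
qed

lemma labs_ge0: "0 \<le> labs (y::'a::bal_algebra)"
proof -
  have "y + - y \<le> labs y + labs y" unfolding labs_def by (rule add_mono) simp_all
  hence "0 \<le> labs y + labs y" by simp
  thus ?thesis using zero_le_double_add_iff_zero_le_single_add by blast
qed
lemma labs_ge: "y \<le> labs (y::'a::bal_algebra)" by (simp add: labs_def)
lemma labs_ge_minus: "- y \<le> labs (y::'a::bal_algebra)" by (simp add: labs_def)
lemma labs_nonneg_eq: "0 \<le> y \<Longrightarrow> labs y = (y::'a::bal_algebra)"
  unfolding labs_def by (rule sup_absorb1) (meson neg_le_0_iff_le order_trans)
lemma labs_le_iff: "labs y \<le> z \<longleftrightarrow> y \<le> z \<and> - y \<le> (z::'a::bal_algebra)"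
  by (simp add: labs_def)
lemma labs_triangle: "labs (y + z) \<le> labs y + labs (z::'a::bal_algebra)"
  unfolding labs_le_iff using add_mono[OF labs_ge_minus[of y] labs_ge_minus[of z]]
  by (simp add: add_mono labs_ge)
lemma labs_minus: "labs (- y) = labs (y::'a::bal_algebra)"
  by (simp add: labs_def sup_commute)
lemma labs_diff: "labs (y - z) \<le> labs y + labs (z::'a::bal_algebra)"
  using labs_triangle[of y "-z"] by (simp add: labs_minus)
lemma labs_mult: "labs (c * d) \<le> labs c * labs (d::'a::bal_algebra)"
proof -
  have c1: "0 \<le> labs c - c" "0 \<le> labs c + c" using labs_ge[of c] add_right_mono[OF labs_ge_minus[of c], of c]
    by (simp_all add: add.commute)
  have d1: "0 \<le> labs d - d" "0 \<le> labs d + d" using labs_ge[of d] add_right_mono[OF labs_ge_minus[of d], of d]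
    by (simp_all add: add.commute)
  have e1: "2 * (labs c * labs d - c * d) = (labs c - c) * (labs d + d) + (labs c + c) * (labs d - d)"
    by (simp add: algebra_simps)
  have e2: "2 * (labs c * labs d + c * d) = (labs c + c) * (labs d + d) + (labs c - c) * (labs d - d)"
    by (simp add: algebra_simps)
  have "0 \<le> 2 * (labs c * labs d - c * d)" unfolding e1
    using c1 d1 by (simp add: add_nonneg_nonneg bal_mult_nonneg)
  hence "0 \<le> (labs c * labs d - c * d) + (labs c * labs d - c * d)" by (simp only: mult_2)
  hence h1: "0 \<le> labs c * labs d - c * d" using zero_le_double_add_iff_zero_le_single_add by blast
  have "0 \<le> 2 * (labs c * labs d + c * d)" unfolding e2
    using c1 d1 by (simp add: add_nonneg_nonneg bal_mult_nonneg)
  hence "0 \<le> (labs c * labs d + c * d) + (labs c * labs d + c * d)" by (simp only: mult_2)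
  hence h2: "0 \<le> labs c * labs d + c * d" using zero_le_double_add_iff_zero_le_single_add by blast
  have "c * d \<le> labs c * labs d" using h1 by (simp only: diff_ge_0_iff_ge)
  moreover have "- (c * d) \<le> labs c * labs d" using add_right_mono[OF h2, of "-(c*d)"] by simp
  ultimately show ?thesis unfolding labs_le_iff by blast
qed

lemma bounded_labs: "\<exists>N::nat. N \<ge> 1 \<and> labs (y::'a::bal_algebra) \<le> of_nat N"
  using bal_bounded by blast

lemma disj_add: assumes "0 \<le> a" "0 \<le> b" "0 \<le> c" "inf a b = 0" "inf a c = (0::'a::bal_algebra)"
  shows "inf a (b + c) = 0"
proof -
  have "inf a (b + c) \<le> inf (a + c) (b + c)"
    using assms by (meson add_increasing2 inf_mono order_refl)
  also have "\<dots> = inf a b + c" by (simp add: add_inf_distrib_right)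
  finally have "inf a (b + c) \<le> inf a c" using assms(4) by simp
  moreover have "0 \<le> inf a (b + c)" using assms by simp
  ultimately show ?thesis using assms(5) by (simp add: antisym)
qed

lemma disj_nat: assumes "0 \<le> a" "0 \<le> b" "inf a b = (0::'a::bal_algebra)"
  shows "inf a (of_nat n * b) = 0"
proof (induction n)
  case 0 show ?case using assms by (simp add: inf_absorb2)
next
  case (Suc n)
  have "0 \<le> of_nat n * b" using assms(2) of_nat_nonneg_bal by (rule_tac bal_mult_nonneg)
  thus ?case using disj_add[OF assms(1,2) _ assms(3) Suc] by (simp add: algebra_simps)
qed

lemma disj_mult: assumes "0 \<le> u" "0 \<le> v" "inf u v = (0::'a::bal_algebra)"
  shows "u * v = 0"
proof -
  obtain N1::nat where N1: "u \<le> of_nat N1" using bal_bounded by blast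
  obtain N2::nat where N2: "v \<le> of_nat N2" using bal_bounded by blast
  define N where "N = N1 + N2"
  have "u \<le> of_nat N" "v \<le> of_nat N" using N1 N2 of_nat_nonneg_bal unfolding N_def
    by (auto intro: order_trans[OF _ add_increasing2] order_trans[OF _ add_increasing])
  hence le1: "u * v \<le> of_nat N * v" using assms(2) by (simp add: mult_right_mono)
  have "v * u \<le> of_nat N * u" using \<open>v \<le> of_nat N\<close> assms(1) by (simp add: mult_right_mono)
  hence le2: "u * v \<le> of_nat N * u" by (simp add: mult.commute)
  have "inf (of_nat N * v) u = 0" using disj_nat[OF assms(1,2,3), of N] by (simp add: inf_commute)
  hence "inf (of_nat N * v) (of_nat N * u) = 0"
    using disj_nat[of "of_nat N * v" u N] assms of_nat_nonneg_bal bal_mult_nonneg by blast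
  hence "u * v \<le> 0" using le1 le2 by (metis le_inf_iff)
  moreover have "0 \<le> u * v" using assms by (simp add: bal_mult_nonneg)
  ultimately show ?thesis by simp
qed

lemma square_nonneg_bal: "0 \<le> (y::'a::bal_algebra) * y"
proof -
  have "pos y * neg y = 0" by (rule disj_mult[OF pos_ge0 neg_ge0 pos_inf_neg])
  have "y * y = (pos y - neg y) * (pos y - neg y)" using pos_minus_neg[of y] by simp
  also have "\<dots> = pos y * pos y + neg y * neg y - 2 * (pos y * neg y)" by (simp add: algebra_simps)
  finally have "y * y = pos y * pos y + neg y * neg y" using \<open>pos y * neg y = 0\<close> by simp
  thus ?thesis by (simp add: add_nonneg_nonneg bal_mult_nonneg pos_ge0 neg_ge0)
qed

lemma idem_nonneg: "p * p = p \<Longrightarrow> 0 \<le> (p::'a::bal_algebra)"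
  using square_nonneg_bal[of p] by simp


definition mon :: "('b \<Rightarrow> 'd::bal_algebra) \<Rightarrow> ('b \<Rightarrow>\<^sub>0 nat) \<Rightarrow> 'd" where
  "mon x m = (\<Prod>e\<in>Poly_Mapping.keys m. x e ^ Poly_Mapping.lookup m e)"

lemma mon_superset: "finite K \<Longrightarrow> Poly_Mapping.keys m \<subseteq> K \<Longrightarrow>
   mon x m = (\<Prod>e\<in>K. x e ^ Poly_Mapping.lookup m e)"
  unfolding mon_def
  by (rule prod.mono_neutral_left) (auto simp: in_keys_iff)

lemma mon_add: "mon x (m + n) = mon x m * mon x n"
proof -
  let ?K = "Poly_Mapping.keys m \<union> Poly_Mapping.keys n"
  have "mon x (m + n) = (\<Prod>e\<in>?K. x e ^ Poly_Mapping.lookup (m+n) e)"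
    by (rule mon_superset) (auto dest: set_mp[OF keys_add])
  also have "\<dots> = (\<Prod>e\<in>?K. x e ^ Poly_Mapping.lookup m e * x e ^ Poly_Mapping.lookup n e)"
    by (simp add: lookup_add power_add)
  also have "\<dots> = mon x m * mon x n"
    by (simp add: prod.distrib mon_superset[of ?K m] mon_superset[of ?K n])
  finally show ?thesis .
qed

lemma mon_zero: "mon x 0 = 1" by (simp add: mon_def)

lemma mon_single: "mon x (Poly_Mapping.single e 1) = x e" unfolding mon_def by simp

lemma peval_superset: "finite K \<Longrightarrow> Poly_Mapping.keys p \<subseteq> K \<Longrightarrow>
   peval x p = (\<Sum>m\<in>K. Poly_Mapping.lookup p m *\<^sub>R mon x m)"
  unfolding peval_def mon_def[symmetric]
  by (rule sum.mono_neutral_left) (auto simp: in_keys_iff)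

lemma peval_add: "peval x (p + q) = peval x p + peval x q"
proof -
  let ?K = "Poly_Mapping.keys p \<union> Poly_Mapping.keys q"
  have "peval x (p + q) = (\<Sum>m\<in>?K. Poly_Mapping.lookup (p+q) m *\<^sub>R mon x m)"
    by (rule peval_superset) (auto dest: set_mp[OF keys_add])
  thus ?thesis
    by (simp add: lookup_add scaleR_add_left sum.distrib peval_superset[of ?K p] peval_superset[of ?K q])
qed

lemma peval_zero: "peval x 0 = 0" by (simp add: peval_def)

lemma peval_uminus: "peval x (- p) = - peval x p"
proof -
  have "peval x p + peval x (-p) = 0" using peval_add[of x p "-p"] by (simp add: peval_zero)
  thus ?thesis by (simp add: add_eq_0_iff)
qed

lemma peval_diff: "peval x (p - q) = peval x p - peval x q"
  using peval_add[of x p "-q"] peval_uminus[of x q] by simp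

lemma peval_single: "peval x (Poly_Mapping.single m c) = c *\<^sub>R mon x m"
  by (cases "c = 0") (simp_all add: peval_def mon_def)

lemma peval_sum: "peval x (sum f K) = (\<Sum>k\<in>K. peval x (f k))"
  by (induction K rule: infinite_finite_induct) (simp_all add: peval_zero peval_add)

lemma poly_expand: "p = (\<Sum>m\<in>Poly_Mapping.keys p. Poly_Mapping.single m (Poly_Mapping.lookup p m))"
  by (rule poly_mapping_eqI)
     (simp add: lookup_sum lookup_single when_def in_keys_iff sum.delta' [of "Poly_Mapping.keys p"] cong: if_cong)

lemma peval_mult: "peval x (p * q) = peval x p * peval x q"
proof -
  have "p * q = (\<Sum>m\<in>Poly_Mapping.keys p. \<Sum>n\<in>Poly_Mapping.keys q.
       Poly_Mapping.single m (Poly_Mapping.lookup p m) * Poly_Mapping.single n (Poly_Mapping.lookup q n))"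
    by (subst poly_expand[of p], subst poly_expand[of q]) (simp add: sum_distrib_left sum_distrib_right, rule sum.swap)
  hence "peval x (p * q) = (\<Sum>m\<in>Poly_Mapping.keys p. \<Sum>n\<in>Poly_Mapping.keys q.
       (Poly_Mapping.lookup p m *\<^sub>R mon x m) * (Poly_Mapping.lookup q n *\<^sub>R mon x n))"
    by (simp add: peval_sum mult_single peval_single mon_add mult.commute)
  also have "\<dots> = peval x p * peval x q"
    unfolding peval_def mon_def[symmetric] by (rule sum_product[symmetric])
  finally show ?thesis .
qed

lemma peval_one: "peval x 1 = 1"
proof -
  have "peval x (1 :: 'b rpoly) = peval x (Poly_Mapping.single 0 1)" by simp
  also have "\<dots> = 1 *\<^sub>R mon x 0" by (rule peval_single)
  finally show ?thesis by (simp add: mon_zero)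
qed

lemma peval_pvar: "peval x (pvar e) = x e"
  unfolding pvar_def peval_single mon_single by simp


lemma lid_ring: "l_ideal J \<Longrightarrow> ring_ideal J" by (simp add: l_ideal_def)
lemma lid_0: "l_ideal J \<Longrightarrow> 0 \<in> J" by (simp add: l_ideal_def ring_ideal_def)
lemma lid_diff: "l_ideal J \<Longrightarrow> a \<in> J \<Longrightarrow> b \<in> J \<Longrightarrow> a - b \<in> J" by (simp add: l_ideal_def ring_ideal_def)
lemma lid_mult: "l_ideal J \<Longrightarrow> a \<in> J \<Longrightarrow> c * a \<in> J" by (simp add: l_ideal_def ring_ideal_def)
lemma lid_solid: "l_ideal J \<Longrightarrow> labs a \<le> labs b \<Longrightarrow> b \<in> J \<Longrightarrow> a \<in> J" unfolding l_ideal_def by blast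
lemma lid_uminus: "l_ideal J \<Longrightarrow> a \<in> J \<Longrightarrow> - a \<in> J" using lid_diff[of J 0 a] lid_0[of J] by simp
lemma lid_add: "l_ideal J \<Longrightarrow> a \<in> J \<Longrightarrow> b \<in> J \<Longrightarrow> a + b \<in> J"
  using lid_diff[of J a "-b"] lid_uminus[of J b] by simp
lemma lid_scaleR: "l_ideal J \<Longrightarrow> a \<in> J \<Longrightarrow> r *\<^sub>R a \<in> J"
  by (simp add: scaleR_as_mult lid_mult)
lemma lid_labs: "l_ideal J \<Longrightarrow> a \<in> J \<Longrightarrow> labs a \<in> J"
  by (rule lid_solid[of J _ a]) (simp_all add: labs_nonneg_eq labs_ge0)
lemma lid_le: "l_ideal J \<Longrightarrow> 0 \<le> d \<Longrightarrow> d \<le> w \<Longrightarrow> w \<in> J \<Longrightarrow> d \<in> J"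
  by (rule lid_solid[of J d w]) (auto simp: labs_nonneg_eq intro: order_trans[OF _ labs_ge])

lemma lid_unit: assumes "l_ideal J" "w \<in> J" "of_real \<delta> \<le> w" "\<delta> > 0"
  shows "J = UNIV"
proof -
  have "(1::'a) = (1/\<delta>) *\<^sub>R of_real \<delta>" using assms(4) by (simp add: scaleR_conv_of_real flip: of_real_mult)
  also have "\<dots> \<le> (1/\<delta>) *\<^sub>R w" using assms by (intro scaleR_mono_bal) simp_all
  finally have "1 \<in> J" using assms one_nonneg_bal lid_scaleR lid_le by blast
  hence "c * 1 \<in> J" for c using assms(1) lid_mult by blast
  thus ?thesis by auto
qed

lemma arch_UNIV: "arch_ideal (UNIV :: 'a::bal_algebra set)"
  unfolding arch_ideal_def l_ideal_def ring_ideal_def quot_le_def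
  by (auto intro: exI[of _ "- _"])

lemma arch_Inter: assumes "\<And>K. K \<in> F \<Longrightarrow> arch_ideal K"
  shows "arch_ideal (\<Inter>F :: 'a::bal_algebra set)"
proof -
  have L: "l_ideal K" if "K \<in> F" for K using assms that by (simp add: arch_ideal_def)
  have "l_ideal (\<Inter>F)"
    unfolding l_ideal_def ring_ideal_def
    using L lid_0 lid_diff lid_mult lid_solid by blast
  moreover have "quot_le (\<Inter>F) x 0" if h: "\<forall>n::nat. n \<ge> 1 \<longrightarrow> quot_le (\<Inter>F) (of_nat n * x) y" for x y
  proof -
    have "pos x \<in> K" if K: "K \<in> F" for K
    proof -
      have "\<forall>n::nat. n \<ge> 1 \<longrightarrow> quot_le K (of_nat n * x) y" using h K unfolding quot_le_def by blast
      hence "quot_le K x 0" using assms[OF K] unfolding arch_ideal_def by blast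
      then obtain c where c: "c \<in> K" "x \<le> c" unfolding quot_le_def by auto
      have "pos x \<le> labs c" unfolding pos_def
        using c(2) labs_ge[of c] labs_ge0[of c] by (meson le_sup_iff order_trans)
      thus ?thesis using lid_le[OF L[OF K] pos_ge0 _ lid_labs[OF L[OF K] c(1)]] by blast
    qed
    thus ?thesis unfolding quot_le_def using pos_ge[of x] by auto
  qed
  ultimately show ?thesis unfolding arch_ideal_def by blast
qed

lemma arch_gen_arch: "arch_ideal (arch_gen S)"
  unfolding arch_gen_def by (rule arch_Inter) auto
lemma arch_gen_sub: "S \<subseteq> arch_gen S" unfolding arch_gen_def by auto
lemma arch_gen_least: "arch_ideal K \<Longrightarrow> S \<subseteq> K \<Longrightarrow> arch_gen S \<subseteq> K" unfolding arch_gen_def by auto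
lemma arch_join_sub: "I \<union> J \<subseteq> arch_join I J" unfolding arch_join_def by (rule arch_gen_sub)
lemma arch_lid: "arch_ideal K \<Longrightarrow> l_ideal K" by (simp add: arch_ideal_def)

lemma bound_r: assumes "l_ideal J" "J \<noteq> UNIV" "b \<le> of_nat N" "neg (b - of_real r) \<in> J"
  shows "r < real N + 1"
proof (rule ccontr)
  assume "\<not> r < real N + 1"
  hence "of_real 1 \<le> (of_real r - of_nat N :: 'a)"
    using of_real_mono_bal[of "real N + 1" r, where 'a='a] by (simp add: algebra_simps)
  also have "\<dots> \<le> of_real r - b" using assms(3) by simp
  also have "\<dots> \<le> neg (b - of_real r)" using neg_ge[of "b - of_real r"] by simp
  finally have "J = UNIV" using lid_unit[OF assms(1,4), of 1] by simp
  thus False using assms(2) by simp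
qed


lemma scaleR_of_real_bal: "r *\<^sub>R (of_real s :: 'a::real_algebra_1) = of_real (r * s)"
  by (simp add: scaleR_conv_of_real of_real_mult)

lemma K_lemma:
  fixes a :: "'a::bal_algebra" and s :: real
  assumes I: "arch_ideal I"
    and ns: "neg (a - of_real s) \<in> I"
    and sup: "\<And>\<delta>. \<delta> > 0 \<Longrightarrow> neg (a - of_real (s + \<delta>)) \<notin> I"
    and c: "0 \<le> c" "c \<le> pos (a - of_real s)"
  shows "arch_join I (arch_gen {c}) \<noteq> UNIV"
proof -
  define c0 where "c0 = pos (a - of_real s)"
  have c0: "0 \<le> c0" unfolding c0_def by (rule pos_ge0)
  have LI: "l_ideal I" using I by (simp add: arch_ideal_def)
  define K where "K = {d. \<forall>\<epsilon>>0. \<exists>n::nat. \<exists>i\<in>I. labs d \<le> of_real \<epsilon> + of_nat n * c0 + i}"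
  have Kmem: "d \<in> K \<longleftrightarrow> (\<forall>\<epsilon>>0. \<exists>n::nat. \<exists>i\<in>I. labs d \<le> of_real \<epsilon> + of_nat n * c0 + i)" for d
    unfolding K_def by simp
  have K0: "0 \<in> K" unfolding Kmem
  proof (intro allI impI)
    fix \<epsilon>::real assume "\<epsilon> > 0"
    show "\<exists>n::nat. \<exists>i\<in>I. labs (0::'a) \<le> of_real \<epsilon> + of_nat n * c0 + i"
      using lid_0[OF LI] of_real_nonneg_bal[of \<epsilon>, where 'a='a] \<open>\<epsilon>>0\<close>
      by (intro exI[of _ 0] bexI[of _ 0]) (simp_all add: labs_nonneg_eq)
  qed
  have Kdiff: "d1 - d2 \<in> K" if h1: "d1 \<in> K" and h2: "d2 \<in> K" for d1 d2 unfolding Kmem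
  proof (intro allI impI)
    fix \<epsilon>::real assume "\<epsilon> > 0"
    obtain n1 i1 where 1: "i1 \<in> I" "labs d1 \<le> of_real (\<epsilon>/2) + of_nat n1 * c0 + i1"
      using h1 \<open>\<epsilon>>0\<close> unfolding Kmem by (meson half_gt_zero)
    obtain n2 i2 where 2: "i2 \<in> I" "labs d2 \<le> of_real (\<epsilon>/2) + of_nat n2 * c0 + i2"
      using h2 \<open>\<epsilon>>0\<close> unfolding Kmem by (meson half_gt_zero)
    have "labs (d1 - d2) \<le> labs d1 + labs d2" by (rule labs_diff)
    also have "\<dots> \<le> (of_real (\<epsilon>/2) + of_nat n1 * c0 + i1) + (of_real (\<epsilon>/2) + of_nat n2 * c0 + i2)"
      using 1 2 by (rule_tac add_mono) simp_all
    also have "\<dots> = of_real \<epsilon> + of_nat (n1+n2) * c0 + (i1 + i2)"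
      by (simp add: algebra_simps flip: of_real_add)
    finally show "\<exists>n::nat. \<exists>i\<in>I. labs (d1 - d2) \<le> of_real \<epsilon> + of_nat n * c0 + i"
      using lid_add[OF LI 1(1) 2(1)] by blast
  qed
  have Kmult: "c' * d \<in> K" if hd: "d \<in> K" for c' d unfolding Kmem
  proof (intro allI impI)
    fix \<epsilon>::real assume "\<epsilon> > 0"
    obtain N::nat where N: "N \<ge> 1" "labs c' \<le> of_nat N" using bounded_labs by blast
    have "\<epsilon> / N > 0" using N \<open>\<epsilon>>0\<close> by simp
    then obtain n i where 1: "i \<in> I" "labs d \<le> of_real (\<epsilon>/N) + of_nat n * c0 + i"
      using hd unfolding Kmem by blast
    have "labs (c' * d) \<le> labs c' * labs d" by (rule labs_mult)
    also have "\<dots> \<le> of_nat N * labs d" using N(2) labs_ge0[of d] by (rule mult_right_mono)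
    also have "\<dots> \<le> of_nat N * (of_real (\<epsilon>/N) + of_nat n * c0 + i)"
      using 1(2) of_nat_nonneg_bal by (rule mult_left_mono)
    also have "\<dots> = of_nat N * of_real (\<epsilon>/N) + of_nat (N*n) * c0 + of_nat N * i"
      by (simp add: algebra_simps)
    also have "(of_nat N :: 'a) * of_real (\<epsilon>/N) = of_real (real N * (\<epsilon>/N))"
      by (simp only: of_real_mult of_real_of_nat_eq)
    also have "real N * (\<epsilon>/N) = \<epsilon>" using N by simp
    finally show "\<exists>n::nat. \<exists>i\<in>I. labs (c' * d) \<le> of_real \<epsilon> + of_nat n * c0 + i"
      using lid_mult[OF LI 1(1)] by blast
  qed
  have Ksolid: "d \<in> K" if "labs d \<le> labs d'" "d' \<in> K" for d d'
    using that unfolding Kmem by (meson order_trans)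
  have LK: "l_ideal K"
    unfolding l_ideal_def ring_ideal_def using K0 Kdiff Kmult Ksolid by blast
  have Karch: "quot_le K x 0" if h: "\<forall>n::nat. n \<ge> 1 \<longrightarrow> quot_le K (of_nat n * x) y" for x y
  proof -
    have "pos x \<in> K" unfolding Kmem
    proof (intro allI impI)
      fix \<epsilon>::real assume "\<epsilon> > 0"
      obtain M::nat where M: "M \<ge> 1" "y \<le> of_nat M" using bal_bounded by blast
      define n::nat where "n = nat \<lceil>2 * M / \<epsilon>\<rceil> + 1"
      have n1: "n \<ge> 1" unfolding n_def by simp
      have "2 * M / \<epsilon> \<le> real n" unfolding n_def by linarith
      hence Mn: "real M / n \<le> \<epsilon> / 2" using \<open>\<epsilon> > 0\<close> n1 by (simp add: field_simps)
      obtain k where k: "k \<in> K" "of_nat n * x \<le> y + k" using h n1 unfolding quot_le_def by blast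
      obtain m i where mi: "i \<in> I" "labs k \<le> of_real (\<epsilon>/2) + of_nat m * c0 + i"
        using k(1) \<open>\<epsilon>>0\<close> unfolding Kmem by (meson half_gt_zero)
      define R where "R = of_nat M + of_real (\<epsilon>/2) + of_nat m * c0 + labs i"
      have "of_nat n * x \<le> y + k" by (rule k(2))
      also have "\<dots> \<le> of_nat M + labs k" using M(2) labs_ge[of k] by (rule add_mono)
      also have "\<dots> \<le> of_nat M + (of_real (\<epsilon>/2) + of_nat m * c0 + i)" using mi(2) by simp
      also have "\<dots> \<le> of_nat M + (of_real (\<epsilon>/2) + of_nat m * c0 + labs i)" using labs_ge[of i] by simp
      finally have "of_nat n * x \<le> R" unfolding R_def by (simp add: add.assoc)
      hence "(1 / real n) *\<^sub>R (of_nat n * x) \<le> (1 / real n) *\<^sub>R R"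
        by (rule scaleR_mono_bal) simp
      moreover have "(1 / real n) *\<^sub>R (of_nat n * x) = x"
      proof -
        have "(of_real (1/real n)::'a) * of_nat n = of_real (1/real n * real n)"
          by (simp only: of_real_mult of_real_of_nat_eq)
        also have "\<dots> = 1" using n1 by simp
        finally show ?thesis by (simp add: scaleR_conv_of_real mult.assoc[symmetric])
      qed
      moreover have "(1 / real n) *\<^sub>R R = of_real (M / n) + of_real (\<epsilon> / 2 / n)
          + (m / n) *\<^sub>R c0 + (1 / real n) *\<^sub>R labs i"
      proof -
        have R': "R = of_real (real M) + of_real (\<epsilon>/2) + real m *\<^sub>R c0 + labs i"
          unfolding R_def by (simp add: scaleR_conv_of_real)
        have e: "1 / real n * real M = real M / real n" "1 / real n * (\<epsilon> / 2) = \<epsilon> / 2 / real n"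
          "1 / real n * real m = real m / real n" by simp_all
        show ?thesis unfolding R' scaleR_add_right scaleR_of_real_bal scaleR_scaleR e ..
      qed
      moreover have "of_real (M / n) \<le> (of_real (\<epsilon>/2) :: 'a)" using Mn by (rule of_real_mono_bal)
      moreover have "of_real (\<epsilon> / 2 / n) \<le> (of_real (\<epsilon>/2) :: 'a)"
        using n1 \<open>\<epsilon>>0\<close> by (intro of_real_mono_bal) (simp add: divide_le_eq)
      moreover have "(m / n) *\<^sub>R c0 \<le> real m *\<^sub>R c0" using n1 c0
        by (intro scaleR_mono_bal2) (simp_all add: divide_le_eq mult_le_cancel_left1)
      moreover have "(1 / real n) *\<^sub>R labs i \<le> 1 *\<^sub>R labs i" using n1 labs_ge0[of i]
        by (intro scaleR_mono_bal2) simp_all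
      ultimately have "x \<le> of_real (\<epsilon>/2) + of_real (\<epsilon>/2) + real m *\<^sub>R c0 + labs i"
        by (smt (verit) add_mono order_trans scaleR_one)
      hence xle: "x \<le> of_real \<epsilon> + of_nat m * c0 + labs i"
        by (simp add: scaleR_conv_of_real flip: of_real_add)
      have "0 \<le> of_real \<epsilon> + of_nat m * c0 + labs i"
        using of_real_nonneg_bal[of \<epsilon>] \<open>\<epsilon>>0\<close> bal_mult_nonneg[OF of_nat_nonneg_bal c0] labs_ge0[of i]
        by (intro add_nonneg_nonneg) simp_all
      hence "pos x \<le> of_real \<epsilon> + of_nat m * c0 + labs i" using xle unfolding pos_def by simp
      hence "labs (pos x) \<le> of_real \<epsilon> + of_nat m * c0 + labs i" by (simp add: labs_nonneg_eq pos_ge0)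
      thus "\<exists>n::nat. \<exists>i\<in>I. labs (pos x) \<le> of_real \<epsilon> + of_nat n * c0 + i"
        using lid_labs[OF LI mi(1)] by blast
    qed
    thus ?thesis unfolding quot_le_def using pos_ge[of x] by auto
  qed
  have AK: "arch_ideal K" unfolding arch_ideal_def using LK Karch by blast
  have IK: "I \<subseteq> K"
  proof
    fix i assume "i \<in> I"
    show "i \<in> K" unfolding Kmem
    proof (intro allI impI)
      fix \<epsilon>::real assume "\<epsilon>>0"
      have "labs i \<le> of_real \<epsilon> + of_nat 0 * c0 + labs i"
        using of_real_nonneg_bal[of \<epsilon>, where 'a='a] \<open>\<epsilon>>0\<close> by simp
      thus "\<exists>n::nat. \<exists>j\<in>I. labs i \<le> of_real \<epsilon> + of_nat n * c0 + j"
        using lid_labs[OF LI \<open>i\<in>I\<close>] by blast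
    qed
  qed
  have cK: "c \<in> K" unfolding Kmem
  proof (intro allI impI)
    fix \<epsilon>::real assume "\<epsilon>>0"
    have "labs c \<le> of_real \<epsilon> + of_nat 1 * c0 + 0"
      using of_real_nonneg_bal[of \<epsilon>, where 'a='a] \<open>\<epsilon>>0\<close> c labs_nonneg_eq[of c]
      unfolding c0_def by (simp add: add_increasing)
    thus "\<exists>n::nat. \<exists>j\<in>I. labs c \<le> of_real \<epsilon> + of_nat n * c0 + j"
      using lid_0[OF LI] by blast
  qed
  have oneK: "1 \<notin> K"
  proof
    assume "1 \<in> K"
    then obtain n i where ni: "i \<in> I" "labs (1::'a) \<le> of_real (1/2) + of_nat n * c0 + i"
      unfolding Kmem by (meson half_gt_zero zero_less_one)
    define m::real where "m = real n + 1"
    have m: "m \<ge> 1" unfolding m_def by simp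
    have "of_nat n * c0 \<le> of_real m * c0" unfolding m_def using c0
      by (intro mult_right_mono) (simp_all add: of_real_mono_bal[of "real n" "real n + 1", simplified])
    have "(1::'a) \<le> of_real (1/2) + of_nat n * c0 + i" using ni(2) unfolding labs_nonneg_eq[OF one_nonneg_bal] .
    also have "\<dots> \<le> of_real (1/2) + of_real m * c0 + i" using \<open>of_nat n * c0 \<le> of_real m * c0\<close> by simp
    finally have h1: "(1::'a) \<le> of_real (1/2) + (of_real m * c0 + i)" by (simp add: add.assoc)
    have "(1::'a) = of_real (1/2) + of_real (1/2)" by (simp flip: of_real_add)
    hence "of_real (1/2) + of_real (1/2) \<le> of_real (1/2) + (of_real m * c0 + (i::'a))" using h1 by simp
    hence "of_real (1/2) \<le> of_real m * c0 + i" by (simp only: add_le_cancel_left)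
    hence "(1/m) *\<^sub>R of_real (1/2) \<le> (1/m) *\<^sub>R (of_real m * c0 + i)"
      using m by (intro scaleR_mono_bal) simp_all
    moreover have "(1/m) *\<^sub>R (of_real m * c0 + i) = c0 + (1/m) *\<^sub>R i"
    proof -
      have "of_real m * c0 = m *\<^sub>R c0" by (simp add: scaleR_conv_of_real)
      hence "(1/m) *\<^sub>R (of_real m * c0) = ((1/m) * m) *\<^sub>R c0" by simp
      also have "(1/m) * m = 1" using m by simp
      finally show ?thesis by (simp add: scaleR_add_right)
    qed
    moreover have "(1/m) *\<^sub>R (of_real (1/2) :: 'a) = of_real (1/(2*m))"
      by (simp add: scaleR_of_real_bal)
    ultimately have dl: "of_real (1/(2*m)) \<le> c0 + (1/m) *\<^sub>R i" by simp
    define w where "w = neg (a - of_real s) + labs ((1/m) *\<^sub>R i)"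
    have wI: "w \<in> I" unfolding w_def using ns lid_labs[OF LI lid_scaleR[OF LI ni(1)]] lid_add[OF LI] by blast
    have w0: "0 \<le> w" unfolding w_def by (simp add: add_nonneg_nonneg neg_ge0 labs_ge0)
    have "of_real (s + 1/(2*m)) - a = of_real (1/(2*m)) - (a - of_real s)" by (simp add: algebra_simps)
    also have "\<dots> \<le> c0 + (1/m) *\<^sub>R i - (a - of_real s)" using dl by simp
    also have "c0 = (a - of_real s) + neg (a - of_real s)" unfolding c0_def by (simp add: add_neg_eq_pos)
    also have "(a - of_real s) + neg (a - of_real s) + (1/m) *\<^sub>R i - (a - of_real s)
       = neg (a - of_real s) + (1/m) *\<^sub>R i" by simp
    also have "\<dots> \<le> w" unfolding w_def by (simp add: labs_ge)
    finally have "neg (a - of_real (s + 1/(2*m))) \<le> w" unfolding neg_def using w0 by simp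
    hence "neg (a - of_real (s + 1/(2*m))) \<in> I" using lid_le[OF LI neg_ge0 _ wI] by blast
    moreover have "1/(2*m) > 0" using m by simp
    ultimately show False using sup by blast
  qed
  have "arch_gen {c} \<subseteq> K" using arch_gen_least[OF AK] cK by blast
  hence "arch_join I (arch_gen {c}) \<subseteq> K" unfolding arch_join_def using arch_gen_least[OF AK] IK by blast
  thus ?thesis using oneK by blast
qed


lemma ideal_gen_sub: "G \<subseteq> ideal_gen G" unfolding ideal_gen_def by auto
lemma ideal_gen_least: "ring_ideal J \<Longrightarrow> G \<subseteq> J \<Longrightarrow> ideal_gen G \<subseteq> J" unfolding ideal_gen_def by auto

definition gens :: "'b::boolean_algebra rpoly set" where
  "gens = {pvar (inf e f) - pvar e * pvar f | e f. True} \<union>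
      {pvar (sup e f) - (pvar e + pvar f - pvar e * pvar f) | e f. True} \<union>
      {pvar (- e) - (1 - pvar e) | e. True} \<union>
      {pvar bot}"

lemma rel_ideal_gens: "rel_ideal = ideal_gen gens" unfolding rel_ideal_def gens_def ..

lemma kernel_gens: "RB_completion x \<Longrightarrow> g \<in> gens \<Longrightarrow> peval x g = 0"
  unfolding RB_completion_def rel_ideal_gens using ideal_gen_sub by blast

lemma x_inf: assumes "RB_completion x" shows "x (inf e f) = x e * x f"
proof -
  have "pvar (inf e f) - pvar e * pvar f \<in> gens" unfolding gens_def by blast
  from kernel_gens[OF assms this] show ?thesis by (simp add: peval_diff peval_mult peval_pvar)
qed

lemma x_neg: assumes "RB_completion x" shows "x (- e) = 1 - x e"
proof -
  have "pvar (- e) - (1 - pvar e) \<in> gens" unfolding gens_def by blast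
  from kernel_gens[OF assms this] show ?thesis by (simp add: peval_diff peval_one peval_pvar)
qed

lemma x_bot: assumes "RB_completion x" shows "x bot = 0"
proof -
  have "pvar bot \<in> gens" unfolding gens_def by blast
  from kernel_gens[OF assms this] show ?thesis by (simp add: peval_pvar)
qed

lemma x_top: "RB_completion x \<Longrightarrow> x top = 1"
  using x_neg[of x bot] x_bot[of x] by simp

lemma x_idem: "RB_completion x \<Longrightarrow> x e * x e = x e"
  using x_inf[of x e e] by simp

lemma x_nonneg: "RB_completion x \<Longrightarrow> 0 \<le> x e"
  using idem_nonneg x_idem by blast

lemma x_le1: "RB_completion x \<Longrightarrow> x e \<le> 1"
  using x_nonneg[of x "-e"] x_neg[of x e] by simp

lemma x_mono: assumes "RB_completion x" "e \<le> f" shows "x e \<le> x f"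
proof -
  have "x e = x e * x f" using x_inf[OF assms(1), of e f] assms(2) by (simp add: inf_absorb1)
  have "x f * x (- e) = x f - x f * x e" using x_neg[OF assms(1), of e] by (simp add: right_diff_distrib)
  hence "x f - x e = x f * x (- e)" using \<open>x e = x e * x f\<close> by (simp add: mult.commute)
  also have "\<dots> = x (inf f (- e))" using x_inf[OF assms(1)] by simp
  finally have "0 \<le> x f - x e" using x_nonneg[OF assms(1)] by simp
  thus ?thesis by simp
qed

definition bfilter :: "'b::boolean_algebra set \<Rightarrow> bool" where
  "bfilter F \<longleftrightarrow> (\<forall>u\<in>F. \<forall>v. u \<le> v \<longrightarrow> v \<in> F) \<and> (\<forall>u\<in>F. \<forall>v\<in>F. inf u v \<in> F) \<and> bot \<notin> F"

lemma ultra_exists: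
  fixes w :: "'b::boolean_algebra"
  assumes "w \<noteq> bot"
  shows "\<exists>M. bfilter M \<and> w \<in> M \<and> (\<forall>e. e \<in> M \<or> - e \<in> M)"
proof -
  define \<A> where "\<A> = {F. bfilter F \<and> w \<in> F}"
  have ne: "\<A> \<noteq> {}"
  proof -
    have "{v. w \<le> v} \<in> \<A>" unfolding \<A>_def bfilter_def using assms
      by (auto intro: order_trans simp: bot_unique)
    thus ?thesis by blast
  qed
  have ch: "\<Union>\<C> \<in> \<A>" if "\<C> \<noteq> {}" "subset.chain \<A> \<C>" for \<C>
  proof -
    have sub: "\<C> \<subseteq> \<A>" and lin: "\<And>X Y. X \<in> \<C> \<Longrightarrow> Y \<in> \<C> \<Longrightarrow> X \<subseteq> Y \<or> Y \<subseteq> X"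
      using that(2) unfolding subset.chain_def by blast+
    have "\<forall>u\<in>\<Union>\<C>. \<forall>v\<in>\<Union>\<C>. inf u v \<in> \<Union>\<C>"
    proof (intro ballI)
      fix u v assume "u \<in> \<Union>\<C>" "v \<in> \<Union>\<C>"
      then obtain X Y where XY: "X \<in> \<C>" "Y \<in> \<C>" "u \<in> X" "v \<in> Y" by blast
      show "inf u v \<in> \<Union>\<C>"
      proof (cases "X \<subseteq> Y")
        case True thus ?thesis using XY sub unfolding \<A>_def bfilter_def by blast
      next
        case False hence "Y \<subseteq> X" using lin XY by blast
        thus ?thesis using XY sub unfolding \<A>_def bfilter_def by blast
      qed
    qed
    thus ?thesis using sub that(1) unfolding \<A>_def bfilter_def by blast
  qed
  obtain M where M: "M \<in> \<A>" and max: "\<And>X. X \<in> \<A> \<Longrightarrow> M \<subseteq> X \<Longrightarrow> X = M"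
    using subset_Zorn_nonempty[OF ne ch] by blast
  have fM: "bfilter M" "w \<in> M" using M unfolding \<A>_def by auto
  have "e \<in> M \<or> - e \<in> M" for e
  proof (rule ccontr)
    assume nn: "\<not> (e \<in> M \<or> - e \<in> M)"
    define F where "F = {v. \<exists>u\<in>M. inf u e \<le> v}"
    have MF: "M \<subseteq> F" unfolding F_def by (auto intro: inf_le1)
    have eF: "e \<in> F" unfolding F_def using fM(2) by (auto intro: inf_le2)
    show False
    proof (cases "bot \<in> F")
      case True
      then obtain u where u: "u \<in> M" "inf u e \<le> bot" unfolding F_def by blast
      hence "u \<le> - e" by (simp add: bot_unique inf_shunt)
      hence "- e \<in> M" using u(1) fM(1) unfolding bfilter_def by blast
      thus False using nn by blast
    next
      case False
      have "bfilter F" unfolding bfilter_def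
      proof (intro conjI ballI allI impI)
        show "v \<in> F" if "u \<in> F" "u \<le> v" for u v using that unfolding F_def by (auto intro: order_trans)
        show "inf u v \<in> F" if huv: "u \<in> F" "v \<in> F" for u v
        proof -
          obtain u1 v1 where "u1 \<in> M" "v1 \<in> M" "inf u1 e \<le> u" "inf v1 e \<le> v"
            using huv unfolding F_def by blast
          moreover have "inf (inf u1 v1) e \<le> inf u v" using calculation
            by (meson inf.bounded_iff inf_le1 inf_le2 order_trans)
          moreover have "inf u1 v1 \<in> M" using calculation fM(1) unfolding bfilter_def by blast
          ultimately show ?thesis unfolding F_def by blast
        qed
        show "bot \<notin> F" using False .
      qed
      hence "F \<in> \<A>" using MF fM(2) unfolding \<A>_def by blast
      hence "F = M" using max MF by blast
      thus False using eF nn by blast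
    qed
  qed
  thus ?thesis using fM by blast
qed

lemma x_nonzero:
  fixes x :: "'b::boolean_algebra \<Rightarrow> 'd::bal_algebra"
  assumes RB: "RB_completion x" and w: "w \<noteq> bot"
  shows "x w \<noteq> 0"
proof
  assume xw: "x w = 0"
  obtain M where M: "bfilter M" "w \<in> M" "\<And>e. e \<in> M \<or> - e \<in> M" using ultra_exists[OF w] by blast
  have up: "\<And>u v. u \<in> M \<Longrightarrow> u \<le> v \<Longrightarrow> v \<in> M" and ic: "\<And>u v. u \<in> M \<Longrightarrow> v \<in> M \<Longrightarrow> inf u v \<in> M"
    and nb: "bot \<notin> M" using M(1) unfolding bfilter_def by blast+
  have inf_iff: "inf e f \<in> M \<longleftrightarrow> e \<in> M \<and> f \<in> M" for e f using up ic by (meson inf_le1 inf_le2)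
  have neg_iff: "- e \<in> M \<longleftrightarrow> e \<notin> M" for e
    using M(3)[of e] ic[of e "-e"] nb by auto
  have sup_iff: "sup e f \<in> M \<longleftrightarrow> e \<in> M \<or> f \<in> M" for e f
  proof
    assume s: "sup e f \<in> M"
    show "e \<in> M \<or> f \<in> M"
    proof (rule ccontr)
      assume "\<not> (e \<in> M \<or> f \<in> M)"
      hence "inf (- e) (- f) \<in> M" using neg_iff inf_iff by blast
      hence "- sup e f \<in> M" by simp
      thus False using s neg_iff by blast
    qed
  next
    assume "e \<in> M \<or> f \<in> M" thus "sup e f \<in> M" using up by (meson sup_ge1 sup_ge2)
  qed
  define \<chi> :: "'b \<Rightarrow> 'd" where "\<chi> e = (if e \<in> M then 1 else 0)" for e
  define J where "J = {p::'b rpoly. peval \<chi> p = 0}"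
  have g1: "\<chi> (inf e f) = \<chi> e * \<chi> f" for e f by (simp add: \<chi>_def inf_iff)
  have g2: "\<chi> (sup e f) = \<chi> e + \<chi> f - \<chi> e * \<chi> f" for e f
    by (cases "e \<in> M"; cases "f \<in> M") (simp_all add: \<chi>_def sup_iff)
  have g3: "\<chi> (- e) = 1 - \<chi> e" for e by (simp add: \<chi>_def neg_iff)
  have g4: "\<chi> bot = 0" by (simp add: \<chi>_def nb)
  have "ring_ideal J" unfolding ring_ideal_def J_def
    by (simp add: peval_zero peval_diff peval_mult)
  moreover have "gens \<subseteq> J"
  proof -
    have "peval \<chi> (pvar (inf e f) - pvar e * pvar f) = 0" for e f
      unfolding peval_diff peval_mult peval_pvar g1 by simp
    moreover have "peval \<chi> (pvar (sup e f) - (pvar e + pvar f - pvar e * pvar f)) = 0" for e f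
      unfolding peval_diff peval_add peval_mult peval_pvar g2 by simp
    moreover have "peval \<chi> (pvar (- e) - (1 - pvar e)) = 0" for e
      unfolding peval_diff peval_one peval_pvar g3 by simp
    moreover have "peval \<chi> (pvar bot) = 0" unfolding peval_pvar g4 ..
    ultimately show ?thesis unfolding gens_def J_def by blast
  qed
  ultimately have "rel_ideal \<subseteq> J" unfolding rel_ideal_gens by (rule ideal_gen_least)
  moreover have "pvar w \<in> rel_ideal"
  proof -
    have "\<forall>p. peval x p = 0 \<longleftrightarrow> p \<in> rel_ideal" using RB unfolding RB_completion_def by (rule conjunct1[OF conjunct2])
    thus ?thesis using xw peval_pvar[of x w] by metis
  qed
  ultimately have "pvar w \<in> J" by blast
  hence "\<chi> w = 0" unfolding J_def by (simp add: peval_pvar)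
  thus False using M(2) unfolding \<chi>_def by simp
qed


lemma T_char:
  fixes a :: "'a::bal_algebra"
  assumes AI: "arch_ideal I" and IU: "I \<noteq> UNIV" and a0: "0 \<le> a"
  defines "s \<equiv> Sup {r::real. neg (a - of_real r) \<in> I}"
  shows "neg (a - of_real s) \<in> I" and "\<And>r. neg (a - of_real r) \<in> I \<longleftrightarrow> r \<le> s"
proof -
  define T where "T = {r::real. neg (a - of_real r) \<in> I}"
  have LI: "l_ideal I" using AI by (simp add: arch_ideal_def)
  have down: "r' \<in> T" if "r \<in> T" "r' \<le> r" for r r'
  proof -
    have "neg (a - of_real r') \<le> neg (a - of_real r)"
      by (rule neg_antimono) (simp add: of_real_mono_bal that(2))
    thus ?thesis using that(1) lid_le[OF LI neg_ge0] unfolding T_def by blast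
  qed
  have zT: "0 \<in> T" unfolding T_def using neg_zero_if[OF a0] lid_0[OF LI] by simp
  obtain N::nat where N: "a \<le> of_nat N" using bal_bounded by blast
  have bdd: "bdd_above T"
  proof
    fix r assume "r \<in> T"
    hence "r < real N + 1" using bound_r[OF LI IU N] unfolding T_def by blast
    thus "r \<le> real N + 1" by simp
  qed
  have ne: "T \<noteq> {}" using zT by blast
  have sT: "s \<in> T"
  proof -
    define d where "d = neg (a - of_real s)"
    have "quot_le I (of_nat n * d) 1" if n: "n \<ge> 1" for n::nat
    proof -
      have "s - 1 / real n < s" using n by simp
      then obtain r where r: "r \<in> T" "s - 1 / real n < r" using less_cSupD[OF ne] unfolding s_def T_def by blast
      hence rT: "s - 1 / real n \<in> T" using down by simp
      let ?i = "neg (a - of_real (s - 1 / real n))"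
      have iI: "?i \<in> I" using rT unfolding T_def by simp
      have "d = neg ((a - of_real (s - 1 / real n)) - of_real (1 / real n))" unfolding d_def
        by (simp add: of_real_diff algebra_simps)
      also have "\<dots> \<le> ?i + of_real (1 / real n)" by (rule neg_diff_le) (simp add: of_real_nonneg_bal)
      finally have "of_nat n * d \<le> of_nat n * (?i + of_real (1 / real n))"
        using of_nat_nonneg_bal by (rule mult_left_mono)
      also have "of_nat n * (?i + of_real (1 / real n)) = 1 + of_nat n * ?i"
      proof -
        have "(of_nat n :: 'a) * of_real (1 / real n) = of_real (real n * (1 / real n))"
          by (simp only: of_real_mult of_real_of_nat_eq)
        also have "\<dots> = 1" using n by simp
        finally show ?thesis by (simp add: distrib_left add.commute)
      qed
      finally show ?thesis unfolding quot_le_def using lid_mult[OF LI iI] by blast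
    qed
    hence "quot_le I d 0" using AI unfolding arch_ideal_def by blast
    then obtain c where c: "c \<in> I" "d \<le> c" unfolding quot_le_def by auto
    have "d \<le> labs c" using c(2) labs_ge order_trans by blast
    hence "d \<in> I" using lid_le[OF LI _ _ lid_labs[OF LI c(1)]] neg_ge0 unfolding d_def by blast
    thus ?thesis unfolding T_def d_def by simp
  qed
  show "neg (a - of_real s) \<in> I" using sT unfolding T_def by simp
  show "neg (a - of_real r) \<in> I \<longleftrightarrow> r \<le> s" for r
  proof
    assume "neg (a - of_real r) \<in> I"
    hence "r \<in> T" unfolding T_def by simp
    thus "r \<le> s" unfolding s_def T_def[symmetric] using bdd by (rule cSup_upper)
  next
    assume "r \<le> s" thus "neg (a - of_real r) \<in> I" using down[OF sT] unfolding T_def by blast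
  qed
qed


lemma lub_eq: "is_lub l S \<Longrightarrow> lub S = (l::'d::order)"
  unfolding lub_def
  by (rule the_equality) (auto simp: is_lub_def intro: antisym)

theorem lemmaA6:
  fixes a :: "'a::bal_algebra" and I :: "'a set"
    and e :: "'a set \<Rightarrow> 'b::boolean_algebra" and x :: "'b \<Rightarrow> 'd::bal_algebra"
  assumes "free_bool_ext e"
    and "RB_completion x"
    and "0 \<le> a"
    and "I \<in> Arch - {UNIV}"
  shows "neg (a - of_real (Sup {r::real. neg (a - of_real r) \<in> I})) \<in> I
    \<and> (\<forall>r::real. r *\<^sub>R x (- e I) \<le> alpha e x a \<longleftrightarrow> neg (a - of_real r) \<in> I)
    \<and> Sup {r::real. neg (a - of_real r) \<in> I} = Sup {r::real. r *\<^sub>R x (- e I) \<le> alpha e x a}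
    \<and> arch_join I (arch_gen {pos (a - of_real (Sup {r::real. neg (a - of_real r) \<in> I}))}) \<noteq> UNIV"
proof -
  note fb = assms(1) and RB = assms(2) and a0 = assms(3)
  have AI: "arch_ideal I" and IU: "I \<noteq> UNIV" and IArch: "I \<in> Arch" using assms(4) by (auto simp: Arch_def)
  have LI: "l_ideal I" using AI by (simp add: arch_ideal_def)
  define s where "s = Sup {r::real. neg (a - of_real r) \<in> I}"
  have s_in: "neg (a - of_real s) \<in> I" and T_iff: "\<And>r. neg (a - of_real r) \<in> I \<longleftrightarrow> r \<le> s"
    using T_char[OF AI IU a0] unfolding s_def by blast+
  have fbI: "inj_on e Arch" "e (arch_gen {}) = bot" "e UNIV = top"
    "\<And>I J. I \<in> Arch \<Longrightarrow> J \<in> Arch \<Longrightarrow> e (arch_join I J) = sup (e I) (e J)"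
    using fb unfolding free_bool_ext_def by blast+
  have UArch: "UNIV \<in> Arch" using arch_UNIV by (simp add: Arch_def)
  have genArch: "arch_gen S \<in> Arch" for S :: "'a set" using arch_gen_arch by (simp add: Arch_def)
  have joinArch: "arch_join J K \<in> Arch" for J K :: "'a set" unfolding arch_join_def by (rule genArch)
  have supd: "neg (a - of_real (s + \<delta>)) \<notin> I" if "\<delta> > 0" for \<delta>
  proof -
    have "\<not> s + \<delta> \<le> s" using that by simp
    thus ?thesis using T_iff[of "s + \<delta>"] by blast
  qed
  have Kgen: "arch_join I (arch_gen {c}) \<noteq> UNIV" if "0 \<le> c" "c \<le> pos (a - of_real s)" for c
    using K_lemma[OF AI s_in supd that] .
  define s0 where "s0 = (SOME s::real. 0 \<le> a + of_real s)"
  have s0: "0 \<le> a + of_real s0" unfolding s0_def by (rule someI[of _ 0]) (simp add: a0)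
  define b where "b = a + of_real s0"
  define S where "S = {r *\<^sub>R x (- e J) | r J. J \<in> Arch \<and> neg (a + of_real s0 - of_real r) \<in> J}"
  have alpha_eq: "alpha e x a = of_real (- s0) + lub S"
    unfolding alpha_def Let_def s0_def S_def by simp
  obtain N0::nat where N0: "b \<le> of_nat N0" using bal_bounded by blast
  define M where "M = real N0 + 1"
  have xb: "x bot = 0" and xt: "x top = 1" using x_bot[OF RB] x_top[OF RB] by auto
  have xnn: "\<And>u. 0 \<le> x u" and xle1: "\<And>u. x u \<le> 1" using x_nonneg[OF RB] x_le1[OF RB] by auto
  have S_elem: "\<And>y. y \<in> S \<Longrightarrow> \<exists>r J. y = r *\<^sub>R x (- e J) \<and> J \<in> Arch \<and> neg (b - of_real r) \<in> J"
    unfolding S_def b_def by blast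
  have Sbound: "y \<le> of_real M" if yS: "y \<in> S" for y
  proof -
    obtain r J where y: "y = r *\<^sub>R x (- e J)" "J \<in> Arch" "neg (b - of_real r) \<in> J" using S_elem[OF yS] by blast
    show ?thesis
    proof (cases "J = UNIV")
      case True thus ?thesis using y fbI(3) xb of_real_nonneg_bal[of M] unfolding M_def by simp
    next
      case False
      have "r < M" using bound_r[OF _ False N0 y(3)] y(2) unfolding M_def Arch_def arch_ideal_def by blast
      hence "r *\<^sub>R x (- e J) \<le> M *\<^sub>R x (- e J)" using xnn by (intro scaleR_mono_bal2) simp_all
      also have "\<dots> \<le> M *\<^sub>R 1" using xle1 unfolding M_def by (intro scaleR_mono_bal) simp_all
      finally show ?thesis using y(1) by (simp add: of_real_eq_scaleR_one)
    qed
  qed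
  have S0: "0 \<in> S" unfolding S_def using UArch by (auto intro!: exI[of _ 0] exI[of _ UNIV])
  obtain L where L: "is_lub L S"
  proof -
    have "dedekind_complete TYPE('d)" using RB unfolding RB_completion_def by blast
    hence "\<exists>l. is_lub l S" unfolding dedekind_complete_def using S0 Sbound by blast
    thus ?thesis using that by blast
  qed
  have alphaL: "alpha e x a = of_real (- s0) + L" using alpha_eq lub_eq[OF L] by simp
  have Lup: "\<And>y. y \<in> S \<Longrightarrow> y \<le> L" and Lleast: "\<And>u. (\<forall>y\<in>S. y \<le> u) \<Longrightarrow> L \<le> u"
    using L unfolding is_lub_def by blast+
  define yI where "yI = x (- e I)"
  have yI0: "0 \<le> yI" and yI1: "yI \<le> 1" and yIid: "yI * yI = yI" unfolding yI_def
    using xnn xle1 x_idem[OF RB] by auto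
  have part2: "r *\<^sub>R yI \<le> of_real (- s0) + L \<longleftrightarrow> neg (a - of_real r) \<in> I" for r
  proof
    assume h: "neg (a - of_real r) \<in> I"
    have "neg (a + of_real s0 - of_real (r + s0)) = neg (a - of_real r)" by (simp add: of_real_add)
    hence "\<exists>r' J. (r + s0) *\<^sub>R x (- e I) = r' *\<^sub>R x (- e J) \<and> J \<in> Arch \<and> neg (a + of_real s0 - of_real r') \<in> J"
      using IArch h by (intro exI[of _ "r + s0"] exI[of _ I]) simp
    hence "(r + s0) *\<^sub>R yI \<in> S" unfolding S_def yI_def by (simp only: mem_Collect_eq)
    hence u: "(r + s0) *\<^sub>R yI \<le> L" by (rule Lup)
    have "neg (a + of_real s0 - of_real s0) = 0" using neg_zero_if[OF a0] by simp
    hence "s0 *\<^sub>R x (- e (arch_gen {})) \<in> S" unfolding S_def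
      using genArch lid_0[OF arch_lid[OF arch_gen_arch]] by (metis (mono_tags, lifting) mem_Collect_eq)
    hence v: "of_real s0 \<le> L" using Lup fbI(2) xt by (simp add: of_real_eq_scaleR_one)
    have "((r + s0) *\<^sub>R yI) * yI \<le> L * yI" using u yI0 by (rule mult_right_mono)
    moreover have "of_real s0 * (1 - yI) \<le> L * (1 - yI)" using v yI1 by (intro mult_right_mono) simp_all
    ultimately have "((r + s0) *\<^sub>R yI) * yI + of_real s0 * (1 - yI) \<le> L * yI + L * (1 - yI)"
      by (rule add_mono)
    moreover have "((r + s0) *\<^sub>R yI) * yI + of_real s0 * (1 - yI) = r *\<^sub>R yI + of_real s0"
    proof -
      have yy: "yI * (yI * c) = yI * c" for c using yIid by (metis mult.assoc)
      show ?thesis by (simp add: algebra_simps scaleR_conv_of_real yy)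
    qed
    moreover have "L * yI + L * (1 - yI) = L" by (simp add: algebra_simps)
    ultimately have "r *\<^sub>R yI + of_real s0 \<le> L" by simp
    thus "r *\<^sub>R yI \<le> of_real (- s0) + L" by (simp add: algebra_simps)
  next
    assume h: "r *\<^sub>R yI \<le> of_real (- s0) + L"
    show "neg (a - of_real r) \<in> I"
    proof (rule ccontr)
      assume nI: "neg (a - of_real r) \<notin> I"
      hence rs: "s < r" using T_iff by force
      define t' where "t' = (s + r) / 2"
      have t': "s < t'" "t' < r" using rs unfolding t'_def by simp_all
      have "neg (a - of_real (- s0)) = 0" using s0 neg_zero_if by simp
      hence "- s0 \<le> s" using T_iff lid_0[OF LI] by metis
      hence tpos: "0 < t' + s0" using t' by simp
      define cC where "cC = pos (a - of_real t')"
      have cC0: "0 \<le> cC" unfolding cC_def by (rule pos_ge0)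
      have cCle: "cC \<le> pos (a - of_real s)" unfolding cC_def pos_def
        using t' by (intro sup_mono) (simp_all add: of_real_mono_bal)
      define C where "C = arch_gen {cC}"
      have CArch: "C \<in> Arch" unfolding C_def by (rule genArch)
      define xC where "xC = x (e C)"
      define U where "U = of_real (t' + s0) + M *\<^sub>R xC"
      have xC0: "0 \<le> xC" unfolding xC_def by (rule xnn)
      have M0: "0 \<le> M" unfolding M_def by simp
      have U0: "of_real (t' + s0) \<le> U" unfolding U_def using xC0 M0
        by (simp add: bal_scale_nonneg)
      have Ubound: "y \<le> U" if yS: "y \<in> S" for y
      proof -
        obtain r' J where y: "y = r' *\<^sub>R x (- e J)" "J \<in> Arch" "neg (b - of_real r') \<in> J"
          using S_elem[OF yS] by blast
        show ?thesis
        proof (cases "J = UNIV \<or> r' \<le> t' + s0")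
          case True
          show ?thesis
          proof (cases "J = UNIV")
            case True
            have "0 \<le> (of_real (t' + s0) :: 'd)" using tpos by (intro of_real_nonneg_bal) simp
            hence "0 \<le> U" using U0 by (rule order_trans)
            thus ?thesis using y True fbI(3) xb by simp
          next
            case False
            hence r't: "r' \<le> t' + s0" using \<open>J = UNIV \<or> r' \<le> t' + s0\<close> by blast
            have "r' *\<^sub>R x (- e J) \<le> max r' 0 *\<^sub>R x (- e J)" using xnn by (intro scaleR_mono_bal2) simp_all
            also have "\<dots> \<le> max r' 0 *\<^sub>R 1" using xle1 by (intro scaleR_mono_bal) simp_all
            also have "\<dots> = of_real (max r' 0)" by (simp add: of_real_eq_scaleR_one)
            also have "\<dots> \<le> of_real (t' + s0)" using r't tpos by (intro of_real_mono_bal) simp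
            finally show ?thesis using y(1) U0 by simp
          qed
        next
          case False
          hence JU: "J \<noteq> UNIV" and r't: "t' + s0 < r'" by auto
          have LJ: "l_ideal J" using y(2) unfolding Arch_def arch_ideal_def by blast
          have rM: "r' < M" using bound_r[OF LJ JU N0 y(3)] unfolding M_def by simp
          define Jn where "Jn = arch_join J C"
          have LJn: "l_ideal Jn" unfolding Jn_def arch_join_def by (rule arch_lid[OF arch_gen_arch])
          have "neg (b - of_real r') \<in> Jn" using y(3) arch_join_sub[of J C] unfolding Jn_def by blast
          moreover have "cC \<in> Jn" using arch_gen_sub[of "{cC}"] arch_join_sub[of J C] unfolding Jn_def C_def by blast
          ultimately have wJ: "neg (b - of_real r') + cC \<in> Jn" using lid_add[OF LJn] by blast
          have "of_real (r' - (t' + s0)) = (of_real r' - b) + (b - of_real s0 - of_real t')"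
            by (simp add: of_real_diff of_real_add algebra_simps)
          also have "\<dots> \<le> neg (b - of_real r') + cC"
            using neg_ge[of "b - of_real r'"] pos_ge[of "a - of_real t'"] unfolding cC_def b_def
            by (intro add_mono) simp_all
          finally have wge: "of_real (r' - (t' + s0)) \<le> neg (b - of_real r') + cC" .
          have "Jn = UNIV" by (rule lid_unit[OF LJn wJ wge]) (use r't in simp)
          hence "sup (e J) (e C) = top" using fbI(3) fbI(4)[OF y(2) CArch] unfolding Jn_def by simp
          hence "- e J \<le> e C" by (simp add: sup_shunt)
          hence xle: "x (- e J) \<le> xC" unfolding xC_def by (rule x_mono[OF RB])
          have "r' *\<^sub>R x (- e J) \<le> M *\<^sub>R x (- e J)" using rM xnn by (intro scaleR_mono_bal2) simp_all
          also have "\<dots> \<le> M *\<^sub>R xC" using xle M0 by (rule scaleR_mono_bal)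
          also have "\<dots> \<le> U" unfolding U_def using of_real_nonneg_bal[of "t' + s0"] tpos by simp
          finally show ?thesis using y(1) by simp
        qed
      qed
      hence LU: "L \<le> U" using Lleast by blast
      define z where "z = yI * (1 - xC)"
      have z0: "0 \<le> z" unfolding z_def using yI0 xle1[of "e C"] unfolding xC_def
        by (simp add: bal_mult_nonneg)
      have xCid: "xC * xC = xC" unfolding xC_def using x_idem[OF RB] by simp
      have zz: "yI * z = z" unfolding z_def using yIid by (simp add: mult.assoc[symmetric])
      have xz: "xC * z = 0"
      proof -
        have "xC * z = xC * yI - (xC * xC) * yI" unfolding z_def by (simp add: algebra_simps)
        thus ?thesis using xCid by simp
      qed
      have "r *\<^sub>R yI + of_real s0 \<le> U" using h LU by (simp add: algebra_simps)
      hence "(r *\<^sub>R yI + of_real s0) * z \<le> U * z" using z0 by (rule mult_right_mono)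
      moreover have "(r *\<^sub>R yI + of_real s0) * z = (r + s0) *\<^sub>R z"
      proof -
        have zc: "yI * (z * c) = z * c" for c using zz by (metis mult.assoc)
        show ?thesis by (simp add: algebra_simps scaleR_conv_of_real zc)
      qed
      moreover have "U * z = (t' + s0) *\<^sub>R z"
      proof -
        have xzc: "xC * (z * c) = 0" for c using xz by (metis mult.assoc mult_zero_left)
        show ?thesis unfolding U_def by (simp add: algebra_simps scaleR_conv_of_real xzc)
      qed
      ultimately have "(r + s0) *\<^sub>R z \<le> (t' + s0) *\<^sub>R z" by simp
      hence "(r - t') *\<^sub>R z \<le> 0" by (simp add: algebra_simps)
      hence "(1 / (r - t')) *\<^sub>R ((r - t') *\<^sub>R z) \<le> (1 / (r - t')) *\<^sub>R 0"
        using t' by (intro scaleR_mono_bal) simp_all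
      hence "z \<le> 0" using t' by simp
      hence z00: "z = 0" using z0 by simp
      have "z = x (- sup (e I) (e C))" unfolding z_def yI_def xC_def
        using x_inf[OF RB] x_neg[OF RB] by simp
      also have "sup (e I) (e C) = e (arch_join I C)" using fbI(4)[OF IArch CArch] by simp
      finally have zx: "z = x (- e (arch_join I C))" .
      have "arch_join I C \<noteq> UNIV" unfolding C_def by (rule Kgen[OF cC0 cCle])
      hence "e (arch_join I C) \<noteq> e UNIV" using fbI(1) joinArch UArch by (meson inj_on_contraD)
      hence "- e (arch_join I C) \<noteq> bot" using fbI(3) by (metis compl_bot_eq double_compl)
      hence "z \<noteq> 0" unfolding zx by (rule x_nonzero[OF RB])
      thus False using z00 by simp
    qed
  qed
  have P2: "\<forall>r::real. r *\<^sub>R x (- e I) \<le> alpha e x a \<longleftrightarrow> neg (a - of_real r) \<in> I"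
    using part2 unfolding alphaL yI_def by blast
  have P3: "Sup {r::real. neg (a - of_real r) \<in> I} = Sup {r::real. r *\<^sub>R x (- e I) \<le> alpha e x a}"
    using P2 by simp
  have P4: "arch_join I (arch_gen {pos (a - of_real s)}) \<noteq> UNIV"
    by (rule Kgen[OF pos_ge0 order_refl])
  show ?thesis using s_in P2 P3 P4 unfolding s_def by blast
qed


end
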